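(* For all integers $m,n\ge0$, $$X_{-m}S_{((n+1)^m)}=(-1)^mS_{(n^m)},\qquad X_{n-m}S_{((n+1)^m)}=(-1)^mS_{(n^{m+1})},\qquad X_nS_{(n^m)}=S_{(n^{m+1})}.$$
   Context: $(n^m)$ denotes the rectangular partition $(n,\ldots,n,0,\ldots)$ with $m$ parts equal to $n$. Schur functions: $S_\lambda(t)=\det(p_{\lambda_i-i+j}(t))_{1\le i,j\le l(\lambda)}$ with $\sum_{n\ge0}p_n(t)z^n=\exp(\sum_{k\ge1}t_kz^k)$, $p_n=0$ for $n<0$, $S_\emptyset=1$. Vertex operators $X_m$ ($m\in\mathbb{Z}$) on $\mathbb{C}[t_1,t_2,\ldots]$: $\sum_{m\in\mathbb{Z}}X_mz^m=\exp(\sum_{k\ge1}t_kz^k)\exp(-\sum_{k\ge1}\frac{z^{-k}}{k}\partial_{t_k})$. *)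

theory Defs
  imports "HOL-Library.Poly_Mapping" "HOL-Computational_Algebra.Formal_Power_Series"
          "Jordan_Normal_Form.Determinant"
begin

text \<open>Polynomials in t_1, t_2, ... with complex coefficients: a monomial is an exponent
 vector (nat with finite support, index k meaning the variable t_k; index 0 unused).\<close>
type_synonym cpoly = "(nat \<Rightarrow>\<^sub>0 nat) \<Rightarrow>\<^sub>0 complex"

definition cconst :: "complex \<Rightarrow> cpoly" where
  "cconst c = Poly_Mapping.single 0 c"

definition var :: "nat \<Rightarrow> cpoly" where
  "var k = Poly_Mapping.single (Poly_Mapping.single k 1) 1"

text \<open>exp F = sum_n F^n/n! for a formal power series F with zero constant term
 (the coefficient of z^a only involves n \<le> a).\<close>
definition fexp :: "cpoly fps \<Rightarrow> cpoly fps" where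
  "fexp F = Abs_fps (\<lambda>a. \<Sum>n\<le>a. cconst (1 / of_nat (fact n)) * fps_nth (F ^ n) a)"

definition hser :: "cpoly fps" where
  "hser = Abs_fps (\<lambda>k. if k = 0 then 0 else var k)"

definition pS :: "int \<Rightarrow> cpoly" where
  "pS a = (if a < 0 then 0 else fps_nth (fexp hser) (nat a))"

definition schur :: "nat list \<Rightarrow> cpoly" where
  "schur lam = det (mat (length lam) (length lam)
      (\<lambda>(i, j). pS (int (lam ! i) - int i + int j)))"

definition rect :: "nat \<Rightarrow> nat \<Rightarrow> nat list" where
  "rect n m = (if n = 0 then [] else replicate m n)"

definition pderivk :: "nat \<Rightarrow> cpoly \<Rightarrow> cpoly" where
  "pderivk k f = (\<Sum>\<alpha>\<in>Poly_Mapping.keys f.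
      Poly_Mapping.single (\<alpha> - Poly_Mapping.single k 1)
        (Poly_Mapping.lookup f \<alpha> * of_nat (Poly_Mapping.lookup \<alpha> k)))"

definition diffop :: "(nat \<Rightarrow>\<^sub>0 nat) \<Rightarrow> cpoly \<Rightarrow> cpoly" where
  "diffop \<alpha> f = foldr (\<lambda>k g. (pderivk k ^^ Poly_Mapping.lookup \<alpha> k) g)
                     (sorted_list_of_set (Poly_Mapping.keys \<alpha>)) f"

text \<open>Substitute the commuting operators d_{t_k} for the variables of a polynomial Q
 and apply the result to f.\<close>
definition apply_op :: "cpoly \<Rightarrow> cpoly \<Rightarrow> cpoly" where
  "apply_op Q f = (\<Sum>\<alpha>\<in>Poly_Mapping.keys Q. cconst (Poly_Mapping.lookup Q \<alpha>) * diffop \<alpha> f)"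

text \<open>exp(- sum_{k\<ge>1} w^k/k d_{t_k}) = sum_b w^b q_b(d), q_b written as a polynomial in
 the symbols d_k (represented by var k).\<close>
definition dser :: "cpoly fps" where
  "dser = Abs_fps (\<lambda>k. if k = 0 then 0 else cconst (- 1 / of_nat k) * var k)"

definition qD :: "nat \<Rightarrow> cpoly" where
  "qD b = fps_nth (fexp dser) b"

text \<open>Vertex operator: X_m is the coefficient of z^m in
 exp(sum t_k z^k) exp(- sum z^(-k)/k d_{t_k}), i.e. X_m f = sum_{a - b = m} p_a q_b(d) f.
 Only finitely many b give q_b(d) f \<noteq> 0, so the sum is over those b.\<close>
definition vertexX :: "int \<Rightarrow> cpoly \<Rightarrow> cpoly" where
  "vertexX m f = (\<Sum>b\<in>{b::nat. apply_op (qD b) f \<noteq> 0}. pS (m + int b) * apply_op (qD b) f)"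

end

theory Submission
  imports Defs
begin

abbreviation lk :: "('a \<Rightarrow>\<^sub>0 'b::zero) \<Rightarrow> 'a \<Rightarrow> 'b" where "lk \<equiv> Poly_Mapping.lookup"
abbreviation ek :: "nat \<Rightarrow> (nat \<Rightarrow>\<^sub>0 nat)" where "ek k \<equiv> Poly_Mapping.single k 1"

lemma lookup_cconst_mult: "lk (cconst c * f) b = c * lk f b"
  unfolding cconst_def mult_map_scale_conv_mult[symmetric]
  by (simp add: Poly_Mapping.map.rep_eq when_def)

lemma cconst_mult: "cconst a * cconst b = cconst (a * b)"
  by (simp add: cconst_def mult_single)

lemma cconst_add: "cconst a + cconst b = cconst (a + b)"
  by (simp add: cconst_def single_add)

lemma cconst_1[simp]: "cconst 1 = 1" and cconst_0[simp]: "cconst 0 = 0"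
  by (simp_all add: cconst_def)

lemma of_nat_cconst: "(of_nat n :: cpoly) = cconst (of_nat n)"
  by (simp add: cconst_def)

lemma cpoly_expand: "(f::cpoly) = (\<Sum>a\<in>Poly_Mapping.keys f. Poly_Mapping.single a (lk f a))"
  by (rule poly_mapping_eqI) (auto simp: lookup_sum lookup_single when_def in_keys_iff sum.delta' sum.delta)

lemma cpoly_cancel_nat:
  assumes "(of_nat n :: cpoly) * x = of_nat n * y" "n > 0"
  shows "x = y"
proof (rule poly_mapping_eqI)
  fix b
  from assms(1) have "cconst (of_nat n) * x = cconst (of_nat n) * y"
    by (simp only: of_nat_cconst)
  hence "lk (cconst (of_nat n) * x) b = lk (cconst (of_nat n) * y) b" by (rule arg_cong)
  thus "lk x b = lk y b" using assms(2) by (simp add: lookup_cconst_mult)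
qed

lemma ek_add_sub: "lk a k > 0 \<Longrightarrow> (a - ek k) + ek k = a"
  by (rule poly_mapping_eqI) (auto simp: lookup_add lookup_minus lookup_single when_def)

lemma lookup_pderivk:
  "lk (pderivk k f) b = lk f (b + ek k) * of_nat (lk b k + 1)"
proof -
  have "lk (pderivk k f) b =
     (\<Sum>a\<in>Poly_Mapping.keys f. lk f a * of_nat (lk a k) when a - ek k = b)"
    unfolding pderivk_def by (simp add: lookup_sum lookup_single when_def eq_commute)
  also have "\<dots> = (\<Sum>a\<in>Poly_Mapping.keys f. if a = b + ek k then lk f a * of_nat (lk a k) else 0)"
  proof (rule sum.cong[OF refl])
    fix a assume "a \<in> Poly_Mapping.keys f"
    show "(lk f a * of_nat (lk a k) when a - ek k = b) =
       (if a = b + ek k then lk f a * of_nat (lk a k) else 0)"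
    proof (cases "lk a k = 0")
      case True
      have "lk (b + ek k) k = lk b k + 1" by (simp add: lookup_add)
    hence "a \<noteq> b + ek k" using True by auto
      thus ?thesis using True by (simp add: when_def)
    next
      case False
      hence "a = (a - ek k) + ek k" using ek_add_sub by auto
      hence "(a - ek k = b) = (a = b + ek k)" by (metis add_diff_cancel_right')
      thus ?thesis by (simp add: when_def)
    qed
  qed
  also have "\<dots> = lk f (b + ek k) * of_nat (lk b k + 1)"
    by (simp add: sum.delta in_keys_iff lookup_add)
  finally show ?thesis .
qed

definition linop :: "(cpoly \<Rightarrow> cpoly) \<Rightarrow> bool" where
  "linop F \<longleftrightarrow> (\<forall>f g. F (f + g) = F f + F g) \<and> (\<forall>c f. F (cconst c * f) = cconst c * F f)"

lemma linopD:
  assumes "linop F"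
  shows "F (f + g) = F f + F g" "F (cconst c * f) = cconst c * F f" "F 0 = 0"
    "F (- f) = - F f" "F (f - g) = F f - F g" "F (sum h S) = (\<Sum>x\<in>S. F (h x))"
proof -
  show 1: "F (f + g) = F f + F g" for f g using assms by (simp add: linop_def)
  show 2: "F (cconst c * f) = cconst c * F f" for c f using assms by (simp add: linop_def)
  show 0: "F 0 = 0" using 2[of 0 0] by simp
  show m: "F (- f) = - F f" for f using 2[of "-1" f] by (simp add: cconst_def single_uminus)
  show "F (f - g) = F f - F g" using 1[of f "-g"] m[of g] by simp
  show "F (sum h S) = (\<Sum>x\<in>S. F (h x))"
    by (induction S rule: infinite_finite_induct) (simp_all add: 0 1)
qed

lemma linop_comp: "linop F \<Longrightarrow> linop G \<Longrightarrow> linop (F \<circ> G)"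
  by (simp add: linop_def)

lemma linop_id: "linop id" by (simp add: linop_def)

lemma linop_funpow: "linop F \<Longrightarrow> linop (F ^^ n)"
  by (induction n) (simp_all add: linop_id linop_comp)

lemma linop_pderivk: "linop (pderivk k)"
  unfolding linop_def
  by (auto intro!: poly_mapping_eqI simp: lookup_pderivk lookup_add lookup_cconst_mult ring_distribs mult.assoc)

lemma pderivk_single: "pderivk k (Poly_Mapping.single a c) =
   Poly_Mapping.single (a - ek k) (c * of_nat (lk a k))"
proof (rule poly_mapping_eqI)
  fix b
  show "lk (pderivk k (Poly_Mapping.single a c)) b =
        lk (Poly_Mapping.single (a - ek k) (c * of_nat (lk a k))) b"
  proof (cases "lk a k = 0")
    case True
    have "lk (b + ek k) k = lk b k + 1" by (simp add: lookup_add)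
    hence "a \<noteq> b + ek k" using True by auto
    thus ?thesis using True by (simp add: lookup_pderivk lookup_single when_def)
  next
    case False
    hence e: "a = (a - ek k) + ek k" using ek_add_sub by auto
    hence "(a = b + ek k) = (a - ek k = b)" by (metis add_diff_cancel_right')
    moreover have "a = b + ek k \<Longrightarrow> lk a k = lk b k + 1"
      by (simp add: lookup_add)
    ultimately show ?thesis by (auto simp: lookup_pderivk lookup_single when_def)
  qed
qed

lemma pderivk_mult_single:
  "pderivk k (Poly_Mapping.single a c * Poly_Mapping.single b d) =
   pderivk k (Poly_Mapping.single a c) * Poly_Mapping.single b d +
   Poly_Mapping.single a c * pderivk k (Poly_Mapping.single b d)"
proof -
  have 1: "lk a k > 0 \<Longrightarrow> a - Poly_Mapping.single k (Suc 0) + b = a + b - Poly_Mapping.single k (Suc 0)" 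
    by (rule poly_mapping_eqI) (auto simp: lookup_add lookup_minus lookup_single when_def)
  have 3: "lk a k > 0 \<Longrightarrow> b + (a - Poly_Mapping.single k (Suc 0)) = a + b - Poly_Mapping.single k (Suc 0)" 
    by (rule poly_mapping_eqI) (auto simp: lookup_add lookup_minus lookup_single when_def)
  have 2: "lk b k > 0 \<Longrightarrow> a + (b - Poly_Mapping.single k (Suc 0)) = a + b - Poly_Mapping.single k (Suc 0)" 
    by (rule poly_mapping_eqI) (auto simp: lookup_add lookup_minus lookup_single when_def)
  have A: "Poly_Mapping.single (a - ek k) (c * of_nat (lk a k)) * Poly_Mapping.single b d
      = Poly_Mapping.single (a + b - ek k) (c * d * of_nat (lk a k))"
    by (cases "lk a k = 0") (simp_all add: mult_single 1 3 mult_ac)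
  have B: "Poly_Mapping.single a c * Poly_Mapping.single (b - ek k) (d * of_nat (lk b k))
      = Poly_Mapping.single (a + b - ek k) (c * d * of_nat (lk b k))"
    by (cases "lk b k = 0") (simp_all add: mult_single 2 mult_ac)
  have "pderivk k (Poly_Mapping.single a c * Poly_Mapping.single b d) =
    Poly_Mapping.single (a + b - ek k) (c * d * of_nat (lk a k) + c * d * of_nat (lk b k))"
    by (simp add: mult_single pderivk_single lookup_add ring_distribs)
  also have "\<dots> = Poly_Mapping.single (a + b - ek k) (c * d * of_nat (lk a k))
     + Poly_Mapping.single (a + b - ek k) (c * d * of_nat (lk b k))"
    by (simp add: single_add)
  also have "\<dots> = pderivk k (Poly_Mapping.single a c) * Poly_Mapping.single b d +
   Poly_Mapping.single a c * pderivk k (Poly_Mapping.single b d)"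
    by (simp only: pderivk_single A B)
  finally show ?thesis .
qed

lemma pderivk_mult: "pderivk k (f * g) = pderivk k f * g + f * pderivk k g"
proof -
  let ?s = "\<lambda>f a. Poly_Mapping.single a (lk f a)"
  have ef: "f = (\<Sum>a\<in>Poly_Mapping.keys f. ?s f a)" by (rule cpoly_expand)
  have eg: "g = (\<Sum>a\<in>Poly_Mapping.keys g. ?s g a)" by (rule cpoly_expand)
  have df: "pderivk k f = (\<Sum>a\<in>Poly_Mapping.keys f. pderivk k (?s f a))"
    using arg_cong[OF ef, of "pderivk k"] by (simp add: linopD[OF linop_pderivk])
  have dg: "pderivk k g = (\<Sum>a\<in>Poly_Mapping.keys g. pderivk k (?s g a))"
    using arg_cong[OF eg, of "pderivk k"] by (simp add: linopD[OF linop_pderivk])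
  have "f * g = (\<Sum>a\<in>Poly_Mapping.keys f. ?s f a) * (\<Sum>a\<in>Poly_Mapping.keys g. ?s g a)"
    by (rule arg_cong2[of _ _ _ _ "(*)"]) (rule ef, rule eg)
  also have "\<dots> = (\<Sum>a\<in>Poly_Mapping.keys f. \<Sum>b\<in>Poly_Mapping.keys g. ?s f a * ?s g b)"
    by (simp add: sum_product)
  finally have "pderivk k (f * g) = (\<Sum>a\<in>Poly_Mapping.keys f. \<Sum>b\<in>Poly_Mapping.keys g.
       pderivk k (?s f a) * ?s g b + ?s f a * pderivk k (?s g b))"
    by (simp add: linopD[OF linop_pderivk] pderivk_mult_single)
  also have "\<dots> = (\<Sum>a\<in>Poly_Mapping.keys f. pderivk k (?s f a)) * (\<Sum>a\<in>Poly_Mapping.keys g. ?s g a)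
     + (\<Sum>a\<in>Poly_Mapping.keys f. ?s f a) * (\<Sum>a\<in>Poly_Mapping.keys g. pderivk k (?s g a))"
    by (simp add: sum.distrib sum_product)
  also have "\<dots> = pderivk k f * g + f * pderivk k g"
    using df dg ef eg by metis
  finally show ?thesis .
qed

lemma add_ek_nonzero: "b + ek k \<noteq> 0"
proof
  assume "b + ek k = 0"
  hence "lk (b + ek k) k = 0" by simp
  thus False by (simp add: lookup_add)
qed

lemma add_ek_nonzero'[simp]: "(b + Poly_Mapping.single k (Suc 0) = (0::nat \<Rightarrow>\<^sub>0 nat)) = False"
  using add_ek_nonzero[of b k] by simp

lemma pderivk_cconst[simp]: "pderivk k (cconst c) = 0"
  by (rule poly_mapping_eqI) (simp add: lookup_pderivk cconst_def lookup_single when_def add_ek_nonzero[symmetric])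

lemma pderivk_1[simp]: "pderivk k 1 = 0"
  using pderivk_cconst[of k 1] by simp

lemma pderivk_var: "pderivk k (var j) = (if j = k then 1 else 0)"
  by (auto simp: var_def pderivk_single lookup_single)

lemma pderivk_comm: "pderivk k (pderivk l f) = pderivk l (pderivk k f)"
  by (rule poly_mapping_eqI) (cases "k = l"; auto simp: lookup_pderivk lookup_add lookup_single ac_simps when_def algebra_simps)


lemma linop_foldr: "(\<And>k. linop (H k)) \<Longrightarrow> linop (\<lambda>f. foldr H xs f)"
proof (induction xs)
  case Nil thus ?case by (simp add: linop_def)
next
  case (Cons x xs)
  have "linop (H x \<circ> (\<lambda>f. foldr H xs f))" by (rule linop_comp) (use Cons in auto)
  thus ?case by (simp add: o_def)
qed

lemma linop_diffop: "linop (diffop a)"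
  unfolding diffop_def[abs_def]
  by (rule linop_foldr) (rule linop_funpow[OF linop_pderivk])

lemma foldr_pull:
  assumes "distinct xs" "k \<in> set xs" "\<And>j g. j \<in> set xs \<Longrightarrow> G k (G j g) = G j (G k g)"
  shows "foldr G xs f = G k (foldr G (remove1 k xs) f)"
  using assms
proof (induction xs)
  case Nil thus ?case by simp
next
  case (Cons x xs)
  show ?case
  proof (cases "x = k")
    case True thus ?thesis by simp
  next
    case False
    hence "k \<in> set xs" using Cons by simp
    hence "foldr G xs f = G k (foldr G (remove1 k xs) f)" using Cons by auto
    thus ?thesis using False Cons.prems(3)[of x] by simp
  qed
qed

lemma pderivk_funpow_comm: "pderivk k ((pderivk l ^^ n) f) = (pderivk l ^^ n) (pderivk k f)"
proof (induction n)
  case (Suc n)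
  have "pderivk k ((pderivk l ^^ Suc n) f) = pderivk l (pderivk k ((pderivk l ^^ n) f))"
    using pderivk_comm by simp
  thus ?case using Suc by simp
qed simp

lemma funpow_funpow_comm: "(pderivk k ^^ m) ((pderivk l ^^ n) f) = (pderivk l ^^ n) ((pderivk k ^^ m) f)"
  by (induction m) (simp_all add: pderivk_funpow_comm)

lemma diffop_zero[simp]: "diffop 0 f = f"
  by (simp add: diffop_def)

lemma diffop_add_ek: "diffop (a + ek k) f = pderivk k (diffop a f)"
proof -
  define G where "G = (\<lambda>j. pderivk j ^^ lk a j)"
  define G' where "G' = (\<lambda>j. pderivk j ^^ lk (a + ek k) j)"
  define s where "s = sorted_list_of_set (Poly_Mapping.keys a)"
  define s' where "s' = sorted_list_of_set (Poly_Mapping.keys (a + ek k))"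
  have ks: "Poly_Mapping.keys (a + ek k) = insert k (Poly_Mapping.keys a)"
    by (auto simp: in_keys_iff lookup_add lookup_single when_def split: if_splits)
  have s'prop: "distinct s'" "k \<in> set s'" "sorted s'" unfolding s'_def ks
    by (simp_all del: sorted_list_of_set_insert sorted_list_of_set_insert_remove)
  have sprop: "distinct s" "sorted s" "set s = Poly_Mapping.keys a" by (auto simp: s_def)
  have rem: "remove1 k s' = remove1 k s"
  proof (rule sorted_distinct_set_unique)
    show "sorted (remove1 k s')" "distinct (remove1 k s')" "sorted (remove1 k s)" "distinct (remove1 k s)"
      using s'prop sprop by (auto simp: sorted_remove1)
    show "set (remove1 k s') = set (remove1 k s)"
      using s'prop sprop ks by (auto simp: s'_def)
  qed
  have G'k: "G' k = pderivk k \<circ> G k" by (simp add: G'_def G_def lookup_add)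
  have G'j: "j \<noteq> k \<Longrightarrow> G' j = G j" for j by (simp add: G'_def G_def lookup_add lookup_single)
  have key: "G k (foldr G (remove1 k s) f) = foldr G s f"
  proof (cases "k \<in> set s")
    case True
    have "foldr G s f = G k (foldr G (remove1 k s) f)"
      by (rule foldr_pull) (use sprop True in \<open>auto simp: G_def funpow_funpow_comm\<close>)
    thus ?thesis by simp
  next
    case False 
    hence "lk a k = 0" using sprop by (simp add: in_keys_iff)
    thus ?thesis using False by (simp add: remove1_idem G_def)
  qed
  have "diffop (a + ek k) f = foldr G' s' f" by (simp add: diffop_def G'_def s'_def)
  also have "\<dots> = G' k (foldr G' (remove1 k s') f)"
    by (rule foldr_pull) (use s'prop in \<open>auto simp: G'_def funpow_funpow_comm\<close>)
  also have "foldr G' (remove1 k s') f = foldr G (remove1 k s) f"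
    unfolding rem using sprop by (intro foldr_cong) (auto simp: G'j)
  also have "G' k (foldr G (remove1 k s) f) = pderivk k (foldr G s f)"
    using key by (simp add: G'k)
  also have "foldr G s f = diffop a f" by (simp add: diffop_def G_def s_def)
  finally show ?thesis .
qed


lemma diffop_add_ek'[simp]: "diffop (a + Poly_Mapping.single k (Suc 0)) f = pderivk k (diffop a f)"
  using diffop_add_ek[of a k f] by simp

lemma apply_op_superset:
  assumes "finite S" "Poly_Mapping.keys Q \<subseteq> S"
  shows "apply_op Q f = (\<Sum>a\<in>S. cconst (lk Q a) * diffop a f)"
  unfolding apply_op_def
  by (rule sum.mono_neutral_left) (use assms in \<open>auto simp: in_keys_iff\<close>)

lemma apply_op_add: "apply_op (P + Q) f = apply_op P f + apply_op Q f"
proof -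
  let ?S = "Poly_Mapping.keys P \<union> Poly_Mapping.keys Q"
  have "apply_op (P + Q) f = (\<Sum>a\<in>?S. cconst (lk (P + Q) a) * diffop a f)"
    by (rule apply_op_superset) (auto simp: keys_add)
  also have "\<dots> = (\<Sum>a\<in>?S. cconst (lk P a) * diffop a f) + (\<Sum>a\<in>?S. cconst (lk Q a) * diffop a f)"
    by (simp add: lookup_add cconst_add[symmetric] ring_distribs sum.distrib)
  also have "\<dots> = apply_op P f + apply_op Q f"
    by (subst (1 2) apply_op_superset[where S = ?S]) auto
  finally show ?thesis .
qed

lemma apply_op_zero[simp]: "apply_op 0 f = 0"
  by (simp add: apply_op_def)

lemma apply_op_sum: "apply_op (sum h S) f = (\<Sum>x\<in>S. apply_op (h x) f)"
  by (induction S rule: infinite_finite_induct) (simp_all add: apply_op_add)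

lemma apply_op_single: "apply_op (Poly_Mapping.single a c) f = cconst c * diffop a f"
  by (cases "c = 0") (simp_all add: apply_op_def)

lemma apply_op_expand: "apply_op Q f = (\<Sum>a\<in>Poly_Mapping.keys Q. apply_op (Poly_Mapping.single a (lk Q a)) f)"
  unfolding apply_op_single by (simp add: apply_op_def)

lemma cconst_mult_single: "cconst c * Poly_Mapping.single a d = Poly_Mapping.single a (c * d)"
  by (simp add: cconst_def mult_single)

lemma apply_op_cconst: "apply_op (cconst c * Q) f = cconst c * apply_op Q f"
proof -
  have "cconst c * Q = (\<Sum>a\<in>Poly_Mapping.keys Q. Poly_Mapping.single a (c * lk Q a))"
    by (subst cpoly_expand) (simp add: sum_distrib_left cconst_mult_single)
  hence "apply_op (cconst c * Q) f = (\<Sum>a\<in>Poly_Mapping.keys Q. cconst c * (cconst (lk Q a) * diffop a f))"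
    by (simp add: apply_op_sum apply_op_single cconst_mult[symmetric] mult.assoc)
  also have "\<dots> = cconst c * apply_op Q f"
    by (simp add: apply_op_def sum_distrib_left)
  finally show ?thesis .
qed

lemma apply_op_var: "apply_op (var k * Q) f = pderivk k (apply_op Q f)"
proof -
  have "var k * Q = (\<Sum>a\<in>Poly_Mapping.keys Q. Poly_Mapping.single (a + ek k) (lk Q a))"
    by (subst cpoly_expand) (simp add: sum_distrib_left var_def mult_single add.commute)
  hence "apply_op (var k * Q) f = (\<Sum>a\<in>Poly_Mapping.keys Q. cconst (lk Q a) * pderivk k (diffop a f))"
    by (simp add: apply_op_sum apply_op_single diffop_add_ek)
  also have "\<dots> = pderivk k (apply_op Q f)"
    by (simp add: apply_op_def linopD[OF linop_pderivk])
  finally show ?thesis .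
qed

lemma apply_op_one[simp]: "apply_op 1 f = f"
  using apply_op_single[of 0 1 f] by simp

lemma apply_op_of_nat: "apply_op (of_nat n * Q) f = of_nat n * apply_op Q f"
  by (simp add: of_nat_cconst apply_op_cconst)

lemma apply_op_uminus: "apply_op (- Q) f = - apply_op Q f"
  using apply_op_cconst[of "-1" Q f] by (simp add: cconst_def single_uminus)

lemma linop_apply_op: "linop (apply_op Q)"
  unfolding linop_def
proof (intro conjI allI)
  fix f g c
  show "apply_op Q (f + g) = apply_op Q f + apply_op Q g"
    by (simp add: apply_op_def linopD(1)[OF linop_diffop] ring_distribs sum.distrib)
  show "apply_op Q (cconst c * f) = cconst c * apply_op Q f"
    by (simp add: apply_op_def linopD(2)[OF linop_diffop] sum_distrib_left mult.left_commute)
qed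


abbreviation fnth :: "'a fps \<Rightarrow> nat \<Rightarrow> 'a" (infixl "$#" 75) where "f $# n \<equiv> fps_nth f n"

lemma power_nth_below:
  fixes F :: "'a::comm_semiring_1 fps"
  assumes "F $# 0 = 0" 
  shows "a < n \<Longrightarrow> (F ^ n) $# a = 0"
proof (induction n arbitrary: a)
  case 0 thus ?case by simp
next
  case (Suc n)
  have "(F ^ Suc n) $# a = (\<Sum>i=0..a. F $# i * (F ^ n) $# (a - i))" by (simp add: fps_mult_nth)
  also have "\<dots> = 0"
  proof (rule sum.neutral, rule ballI)
    fix i assume "i \<in> {0..a}"
    show "F $# i * (F ^ n) $# (a - i) = 0"
      using Suc.IH[of "a - i"] Suc.prems assms \<open>i \<in> {0..a}\<close> by (cases i) auto
  qed
  finally show ?case .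
qed

lemma fexp_nth_le:
  assumes "F $# 0 = 0" "b \<le> N"
  shows "fexp F $# b = (\<Sum>n\<le>N. cconst (1 / of_nat (fact n)) * (F ^ n) $# b)"
  unfolding fexp_def fps_nth_Abs_fps
  by (rule sum.mono_neutral_left) (use assms power_nth_below[OF assms(1)] in auto)

lemma fexp_nth0: "fexp F $# 0 = 1"
  by (simp add: fexp_def)

lemma cconst_fact_Suc: "cconst (1 / of_nat (fact (Suc m))) * of_nat (Suc m) = cconst (1 / of_nat (fact m))"
proof -
  have h: "\<And>x y::complex. x \<noteq> 0 \<Longrightarrow> 1/(x*y)*x = 1/y"
    by (case_tac "y = 0") (simp_all add: field_simps)
  have "(1 / of_nat (fact (Suc m)) :: complex) * of_nat (Suc m) = 1 / of_nat (fact m)"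
  proof -
    have "(of_nat (Suc m) :: complex) \<noteq> 0" by (simp only: of_nat_eq_0_iff)
    hence "1 / (of_nat (Suc m) * of_nat (fact m)) * of_nat (Suc m) = (1 / of_nat (fact m) :: complex)"
      by (rule h)
    thus ?thesis by (simp only: fact_Suc of_nat_mult of_nat_id)
  qed
  thus ?thesis by (simp only: of_nat_cconst cconst_mult)
qed

lemma fexp_deriv:
  assumes F0: "F $# 0 = 0"
  shows "fps_deriv (fexp F) = fps_deriv F * fexp F"
proof (rule fps_ext)
  fix a
  define c where "c = (\<lambda>n::nat. cconst (1 / of_nat (fact n)))"
  have E: "\<And>b N. b \<le> N \<Longrightarrow> fexp F $# b = (\<Sum>n\<le>N. c n * (F^n) $# b)"
    unfolding c_def by (rule fexp_nth_le[OF F0])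
  have "fps_deriv (fexp F) $# a = of_nat (a+1) * fexp F $# (a+1)" by simp
  also have "\<dots> = of_nat (a+1) * (\<Sum>n\<le>Suc a. c n * (F^n) $# (a+1))"
    using E[of "a+1" "Suc a"] by simp
  also have "\<dots> = (\<Sum>n\<le>Suc a. c n * (of_nat (a+1) * (F^n) $# (a+1)))"
    by (simp only: sum_distrib_left mult.left_commute)
  also have "\<dots> = (\<Sum>n\<le>Suc a. c n * (fps_deriv (F^n)) $# a)" by simp
  also have "\<dots> = (\<Sum>n\<le>Suc a. (c n * of_nat n) * (fps_deriv F * F^(n-1)) $# a)"
    by (simp only: fps_deriv_power mult.assoc fps_mult_left_const_nth)
  also have "\<dots> = (\<Sum>m\<le>a. c m * (fps_deriv F * F^m) $# a)"
    by (subst sum.atMost_Suc_shift) (simp only: c_def cconst_fact_Suc diff_Suc_1, simp)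
  also have "\<dots> = (\<Sum>m\<le>a. c m * (\<Sum>i=0..a. fps_deriv F $# i * (F^m) $# (a - i)))"
    by (simp add: fps_mult_nth)
  also have "\<dots> = (\<Sum>i=0..a. fps_deriv F $# i * (\<Sum>m\<le>a. c m * (F^m) $# (a - i)))"
    by (simp add: sum_distrib_left mult_ac sum.swap[of _ "{..a}"])
  also have "\<dots> = (\<Sum>i=0..a. fps_deriv F $# i * fexp F $# (a - i))"
    by (rule sum.cong[OF refl], subst E[of _ a]) auto
  also have "\<dots> = (fps_deriv F * fexp F) $# a" by (simp add: fps_mult_nth)
  finally show "fps_deriv (fexp F) $# a = (fps_deriv F * fexp F) $# a" .
qed

lemma fexp_rec:
  assumes "F $# 0 = 0"
  shows "of_nat (Suc a) * fexp F $# Suc a = (\<Sum>i\<le>a. of_nat (Suc i) * F $# Suc i * fexp F $# (a - i))"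
proof -
  have "fps_deriv (fexp F) $# a = (fps_deriv F * fexp F) $# a" by (simp only: fexp_deriv[OF assms])
  thus ?thesis by (simp add: fps_mult_nth atLeast0AtMost)
qed


subsection \<open>Recursions for p and q\<close>

lemma hser0: "hser $# 0 = 0" by (simp add: hser_def)
lemma dser0: "dser $# 0 = 0" by (simp add: dser_def)

lemma pS_nat: "pS (int a) = fexp hser $# a" by (simp add: pS_def)
lemma pS_neg: "a < 0 \<Longrightarrow> pS a = 0" by (simp add: pS_def)
lemma pS_0: "pS 0 = 1" using pS_nat[of 0] by (simp add: fexp_nth0)

lemma pS_rec: "of_nat (Suc a) * pS (int (Suc a)) =
   (\<Sum>i\<le>a. of_nat (Suc i) * var (Suc i) * pS (int a - int i))"
proof -
  have "of_nat (Suc a) * pS (int (Suc a)) = (\<Sum>i\<le>a. of_nat (Suc i) * hser $# Suc i * fexp hser $# (a - i))"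
    unfolding pS_nat by (rule fexp_rec[OF hser0])
  also have "\<dots> = (\<Sum>i\<le>a. of_nat (Suc i) * var (Suc i) * pS (int a - int i))"
  proof (rule sum.cong[OF refl])
    fix i assume "i \<in> {..a}"
    hence "fexp hser $# (a - i) = pS (int a - int i)" by (simp add: pS_nat[symmetric] of_nat_diff)
    moreover have "hser $# Suc i = var (Suc i)" by (simp add: hser_def)
    ultimately show "of_nat (Suc i) * hser $# Suc i * fexp hser $# (a - i) = 
       of_nat (Suc i) * var (Suc i) * pS (int a - int i)" by simp
  qed
  finally show ?thesis .
qed

lemma qD0: "qD 0 = 1" by (simp add: qD_def fexp_nth0)

lemma qD_rec: "of_nat (Suc a) * qD (Suc a) = - (\<Sum>i\<le>a. var (Suc i) * qD (a - i))"
proof -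
  have "of_nat (Suc a) * qD (Suc a) = (\<Sum>i\<le>a. of_nat (Suc i) * dser $# Suc i * qD (a - i))"
    unfolding qD_def by (rule fexp_rec[OF dser0])
  also have "\<dots> = (\<Sum>i\<le>a. - (var (Suc i) * qD (a - i)))"
  proof (rule sum.cong[OF refl])
    fix i
    have "(of_nat (Suc i) :: cpoly) * cconst (- 1 / of_nat (Suc i)) = - 1"
      unfolding of_nat_cconst cconst_mult 
      by (simp add: cconst_def single_uminus del: of_nat_Suc)
    thus "of_nat (Suc i) * dser $# Suc i * qD (a - i) = - (var (Suc i) * qD (a - i))"
      by (simp add: dser_def mult.assoc[symmetric] del: of_nat_Suc)
  qed
  finally show ?thesis by (simp add: sum_negf)
qed

lemma pderivk_of_nat_mult: "pderivk k (of_nat n * f) = of_nat n * pderivk k f"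
  by (simp add: of_nat_cconst linopD(2)[OF linop_pderivk])

lemma pderivk_of_nat[simp]: "pderivk k (of_nat n) = 0"
  by (simp only: of_nat_cconst pderivk_cconst)

lemma pderivk_pS_nat: "k \<ge> 1 \<Longrightarrow> pderivk k (pS (int n)) = pS (int n - int k)"
proof (induction n rule: less_induct)
  case (less n)
  show ?case
  proof (cases n)
    case 0 thus ?thesis using less.prems by (simp add: pS_0 pS_neg)
  next
    case (Suc a)
    have IH: "pderivk k (pS (int a - int i)) = pS (int a - int i - int k)" if i: "i \<le> a" for i
    proof -
      have "pderivk k (pS (int (a - i))) = pS (int (a - i) - int k)"
        using less.IH[of "a - i"] less.prems Suc by simp
      thus ?thesis using i by (simp add: of_nat_diff)
    qed
    have "of_nat (Suc a) * pderivk k (pS (int n)) = pderivk k (of_nat (Suc a) * pS (int (Suc a)))"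
      by (simp add: pderivk_of_nat_mult Suc del: of_nat_Suc)
    also have "\<dots> = (\<Sum>i\<le>a. of_nat (Suc i) * ((if Suc i = k then 1 else 0) * pS (int a - int i)
                        + var (Suc i) * pS (int a - int i - int k)))"
      unfolding pS_rec 
      by (simp add: linopD(6)[OF linop_pderivk] pderivk_of_nat_mult mult.assoc pderivk_mult pderivk_var IH
           del: of_nat_Suc)
    also have "\<dots> = (\<Sum>i\<le>a. (if Suc i = k then of_nat k * pS (int a - int i) else 0))
                   + (\<Sum>i\<le>a. of_nat (Suc i) * var (Suc i) * pS (int a - int i - int k))"
      by (simp add: sum.distrib ring_distribs mult.assoc del: of_nat_Suc,
          rule sum.cong, auto)
    also have "\<dots> = of_nat (Suc a) * pS (int n - int k)"
    proof (cases "k \<le> Suc a")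
      case False
      have "(\<Sum>i\<le>a. of_nat (Suc i) * var (Suc i) * pS (int a - int i - int k)) = 0"
        by (rule sum.neutral) (use False in \<open>auto simp: pS_neg\<close>)
      moreover have "(\<Sum>i\<le>a. (if Suc i = k then of_nat k * pS (int a - int i) else 0)) = 0"
        by (rule sum.neutral) (use False in auto)
      ultimately show ?thesis using False Suc by (simp add: pS_neg)
    next
      case True
      have 1: "(\<Sum>i\<le>a. (if Suc i = k then of_nat k * pS (int a - int i) else 0))
            = of_nat k * pS (int n - int k)"
      proof -
        have "(\<Sum>i\<le>a. (if Suc i = k then of_nat k * pS (int a - int i) else 0))
            = (\<Sum>i\<le>a. (if i = k - 1 then of_nat k * pS (int a - int i) else 0))"
          by (rule sum.cong) (use less.prems in auto)
        also have "\<dots> = of_nat k * pS (int a - int (k - 1))"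
          using True less.prems by (simp add: sum.delta)
        also have "int a - int (k - 1) = int n - int k" using Suc less.prems by simp
        finally show ?thesis .
      qed
      show ?thesis
      proof (cases "k = Suc a")
        case True
        have "(\<Sum>i\<le>a. of_nat (Suc i) * var (Suc i) * pS (int a - int i - int k)) = 0"
          by (rule sum.neutral) (use True in \<open>auto simp: pS_neg\<close>)
        thus ?thesis using 1 True Suc by simp
      next
        case False
        then obtain c where c: "a = c + k" using \<open>k \<le> Suc a\<close> by (metis le_SucE le_add_diff_inverse2)
        have "(\<Sum>i\<le>a. of_nat (Suc i) * var (Suc i) * pS (int a - int i - int k))
             = (\<Sum>i\<le>c. of_nat (Suc i) * var (Suc i) * pS (int c - int i))"
        proof -
          have "(\<Sum>i\<le>a. of_nat (Suc i) * var (Suc i) * pS (int a - int i - int k))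
             = (\<Sum>i\<le>c. of_nat (Suc i) * var (Suc i) * pS (int a - int i - int k))"
            by (rule sum.mono_neutral_right) (use c in \<open>auto simp: pS_neg\<close>)
          thus ?thesis using c by simp
        qed
        also have "\<dots> = of_nat (Suc c) * pS (int (Suc c))" by (rule pS_rec[symmetric])
        finally have 2: "(\<Sum>i\<le>a. of_nat (Suc i) * var (Suc i) * pS (int a - int i - int k))
             = of_nat (Suc c) * pS (int n - int k)" using c Suc by simp
        show ?thesis unfolding 1 2 using c Suc less.prems
          by (simp add: ring_distribs[symmetric] del: of_nat_Suc) (simp add: algebra_simps)
      qed
    qed
    finally show ?thesis using cpoly_cancel_nat[of "Suc a"] by (simp del: of_nat_Suc)
  qed
qed

lemma pderivk_pS: "k \<ge> 1 \<Longrightarrow> pderivk k (pS a) = pS (a - int k)"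
proof (cases "a < 0")
  case True thus "k \<ge> 1 \<Longrightarrow> ?thesis" by (simp add: pS_neg linopD(3)[OF linop_pderivk])
next
  case False
  then obtain n where "a = int n" by (metis nonneg_int_cases not_less)
  thus "k \<ge> 1 \<Longrightarrow> ?thesis" by (simp add: pderivk_pS_nat)
qed


definition Dop :: "nat \<Rightarrow> cpoly \<Rightarrow> cpoly" where "Dop b f = apply_op (qD b) f"

lemma D0[simp]: "Dop 0 f = f" by (simp add: Dop_def qD0)

lemma linop_D: "linop (Dop b)"
  unfolding Dop_def[abs_def] by (rule linop_apply_op)

lemma D_rec: "of_nat (Suc a) * Dop (Suc a) f = - (\<Sum>i\<le>a. pderivk (Suc i) (Dop (a - i) f))"
proof -
  have "of_nat (Suc a) * Dop (Suc a) f = apply_op (of_nat (Suc a) * qD (Suc a)) f"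
    by (simp only: Dop_def apply_op_of_nat)
  also have "\<dots> = - (\<Sum>i\<le>a. pderivk (Suc i) (Dop (a - i) f))"
    by (simp only: qD_rec apply_op_uminus apply_op_sum apply_op_var Dop_def)
  finally show ?thesis .
qed

lemma D_rec': "of_nat b * Dop b f = - (\<Sum>k\<in>{1..b}. pderivk k (Dop (b - k) f))"
proof (cases b)
  case 0 thus ?thesis by simp
next
  case (Suc a)
  have "(\<Sum>k\<in>{1..b}. pderivk k (Dop (b - k) f)) = (\<Sum>i\<in>{0..a}. pderivk (Suc i) (Dop (a - i) f))"
    unfolding Suc One_nat_def sum.shift_bounds_cl_Suc_ivl by simp
  thus ?thesis using D_rec[of a f] Suc by (simp add: atLeast0AtMost del: of_nat_Suc)
qed

lemma D_pS: "Dop b (pS a) = (if b = 0 then pS a else if b = 1 then - pS (a - 1) else 0)"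
proof (induction b rule: less_induct)
  case (less b)
  show ?case
  proof (cases b)
    case 0 thus ?thesis by simp
  next
    case (Suc c)
    show ?thesis
    proof (cases c)
      case 0
      have "of_nat (Suc 0) * Dop (Suc 0) (pS a) = - pS (a - 1)"
        using D_rec[of 0 "pS a"] by (simp add: pderivk_pS)
      thus ?thesis using Suc 0 by simp
    next
      case (Suc d)
      have "(\<Sum>i\<le>c. pderivk (Suc i) (Dop (c - i) (pS a))) = 
            (\<Sum>i<d. pderivk (Suc i) (Dop (c - i) (pS a))) + pderivk (Suc d) (Dop 1 (pS a))
             + pderivk (Suc c) (Dop 0 (pS a))"
        using Suc by (simp add: lessThan_Suc_atMost[symmetric])
      also have "(\<Sum>i<d. pderivk (Suc i) (Dop (c - i) (pS a))) = 0"
      proof (rule sum.neutral, rule ballI)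
        fix i assume "i \<in> {..<d}"
        hence "Dop (c - i) (pS a) = 0" using less.IH[of "c - i"] \<open>b = Suc c\<close> Suc by auto
        thus "pderivk (Suc i) (Dop (c - i) (pS a)) = 0" by (simp add: linopD(3)[OF linop_pderivk])
      qed
      also have "Dop 1 (pS a) = - pS (a - 1)" using less.IH[of 1] \<open>b = Suc c\<close> Suc by auto
      finally have "(\<Sum>i\<le>c. pderivk (Suc i) (Dop (c - i) (pS a))) = 0"
        using Suc by (simp add: linopD(4)[OF linop_pderivk] pderivk_pS algebra_simps)
      hence "of_nat (Suc c) * Dop (Suc c) (pS a) = of_nat (Suc c) * 0"
        using D_rec[of c "pS a"] by simp
      hence "Dop (Suc c) (pS a) = 0" by (rule cpoly_cancel_nat) simp
      thus ?thesis using \<open>b = Suc c\<close> Suc by simp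
    qed
  qed
qed

lemma D_one: "Dop b 1 = (if b = 0 then 1 else 0)"
proof (induction b rule: less_induct)
  case (less b)
  show ?case
  proof (cases b)
    case 0 thus ?thesis by simp
  next
    case (Suc c)
    have "(\<Sum>i\<le>c. pderivk (Suc i) (Dop (c - i) 1)) = 0"
    proof (rule sum.neutral, rule ballI)
      fix i assume "i \<in> {..c}"
      thus "pderivk (Suc i) (Dop (c - i) 1) = 0" using less.IH[of "c - i"] Suc
        by (auto simp: linopD(3)[OF linop_pderivk])
    qed
    hence "of_nat (Suc c) * Dop (Suc c) 1 = of_nat (Suc c) * 0"
      using D_rec[of c 1] by simp
    hence "Dop (Suc c) 1 = 0" by (rule cpoly_cancel_nat) simp
    thus ?thesis using Suc by simp
  qed
qed


subsection \<open>Multiplicativity\<close>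

definition Tm :: "cpoly \<Rightarrow> cpoly fps" where "Tm f = Abs_fps (\<lambda>b. Dop b f)"
definition pk :: "nat \<Rightarrow> cpoly fps \<Rightarrow> cpoly fps" where "pk k A = Abs_fps (\<lambda>n. pderivk k (A $# n))"

lemma Tm_nth[simp]: "Tm f $# b = Dop b f" by (simp add: Tm_def)
lemma pk_nth[simp]: "pk k A $# n = pderivk k (A $# n)" by (simp add: pk_def)

lemma pk_add: "pk k (A + B) = pk k A + pk k B"
  by (rule fps_ext) (simp add: linopD(1)[OF linop_pderivk])

lemma pk_mult: "pk k (A * B) = pk k A * B + A * pk k B"
  by (rule fps_ext) (simp add: fps_mult_nth linopD(6)[OF linop_pderivk] pderivk_mult sum.distrib)

lemma euler_nth: "(fps_X * fps_deriv A) $# n = of_nat n * A $# n"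
  by (cases n) (simp_all del: of_nat_Suc)

lemma mult_nth_zero: "(\<And>i. i \<le> b \<Longrightarrow> P $# i = 0) \<Longrightarrow> ((P::cpoly fps) * Q) $# b = 0"
  by (simp add: fps_mult_nth)

lemma S_nth:
  assumes "i \<le> b"
  shows "(\<Sum>k\<in>{1..b}. fps_X^k * pk k (Tm f)) $# i = - (of_nat i * Dop i f)"
proof -
  have "(\<Sum>k\<in>{1..b}. fps_X^k * pk k (Tm f)) $# i = (\<Sum>k\<in>{1..b}. if i < k then 0 else pderivk k (Dop (i - k) f))"
    by (simp add: fps_sum_nth fps_X_power_mult_nth cong: if_cong)
  also have "\<dots> = (\<Sum>k\<in>{1..i}. if i < k then 0 else pderivk k (Dop (i - k) f))"
    by (rule sum.mono_neutral_right) (use assms in auto)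
  also have "\<dots> = (\<Sum>k\<in>{1..i}. pderivk k (Dop (i - k) f))"
    by (rule sum.cong) auto
  also have "\<dots> = - (of_nat i * Dop i f)" using D_rec'[of i f] by simp
  finally show ?thesis .
qed

lemma D_mult: "Dop b (f * g) = (Tm f * Tm g) $# b"
proof (induction b rule: less_induct)
  case (less b)
  define A where "A = Tm f"
  define B where "B = Tm g"
  define SA where "SA = (\<Sum>k\<in>{1..b}. fps_X^k * pk k A)"
  define SB where "SB = (\<Sum>k\<in>{1..b}. fps_X^k * pk k B)"
  have zA: "(fps_X * fps_deriv A + SA) $# i = 0" if "i \<le> b" for i
    using S_nth[OF that, of f] by (simp add: A_def SA_def euler_nth)
  have zB: "(fps_X * fps_deriv B + SB) $# i = 0" if "i \<le> b" for i
    using S_nth[OF that, of g] by (simp add: B_def SB_def euler_nth)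
  have "((fps_X * fps_deriv A + SA) * B) $# b = 0" by (rule mult_nth_zero) (rule zA)
  moreover have "((fps_X * fps_deriv B + SB) * A) $# b = 0" by (rule mult_nth_zero) (rule zB)
  ultimately have "((fps_X * fps_deriv A + SA) * B + (fps_X * fps_deriv B + SB) * A) $# b = 0" by simp
  moreover have "(fps_X * fps_deriv A + SA) * B + (fps_X * fps_deriv B + SB) * A
      = fps_X * fps_deriv (A * B) + (\<Sum>k\<in>{1..b}. fps_X^k * pk k (A * B))"
    by (simp add: SA_def SB_def pk_mult ring_distribs sum_distrib_left sum_distrib_right sum.distrib mult_ac)
  ultimately have F1: "of_nat b * (A * B) $# b + (\<Sum>k\<in>{1..b}. pderivk k ((A * B) $# (b - k))) = 0"
    by (simp add: euler_nth fps_sum_nth fps_X_power_mult_nth del: fps_deriv_mult fps_X_mult_nth)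
  have F2: "(\<Sum>k\<in>{1..b}. pderivk k ((A * B) $# (b - k))) = (\<Sum>k\<in>{1..b}. pderivk k (Dop (b - k) (f * g)))"
    by (rule sum.cong[OF refl]) (use less.IH in \<open>auto simp: A_def B_def\<close>)
  have e1: "of_nat b * (A * B) $# b + (\<Sum>k\<in>{1..b}. pderivk k (Dop (b - k) (f * g))) = 0"
    using F1 unfolding F2 .
  have e2: "of_nat b * Dop b (f * g) + (\<Sum>k\<in>{1..b}. pderivk k (Dop (b - k) (f * g))) = 0"
    by (subst eq_neg_iff_add_eq_0[symmetric]) (rule D_rec')
  have e3: "of_nat b * (A * B) $# b = of_nat b * Dop b (f * g)"
    by (rule add_right_imp_eq[of _ "\<Sum>k\<in>{1..b}. pderivk k (Dop (b - k) (f * g))"]) (simp only: e1 e2)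
  show ?case
  proof (cases b)
    case 0 thus ?thesis by (simp add: fps_mult_nth)
  next
    case (Suc c)
    have "(A * B) $# b = Dop b (f * g)" by (rule cpoly_cancel_nat[OF e3]) (simp add: Suc)
    thus ?thesis by (simp add: A_def B_def)
  qed
qed

lemma Tm_mult: "Tm (f * g) = Tm f * Tm g"
  by (rule fps_ext) (simp add: D_mult)

lemma Tm_add: "Tm (f + g) = Tm f + Tm g"
  by (rule fps_ext) (simp add: linopD(1)[OF linop_D])

lemma Tm_zero: "Tm 0 = 0"
  by (rule fps_ext) (simp add: linopD(3)[OF linop_D])

lemma Tm_one: "Tm 1 = 1"
  by (rule fps_ext) (simp add: D_one)

interpretation Tm_hom: comm_ring_hom Tm
  by unfold_locales (simp_all add: Tm_add Tm_mult Tm_one Tm_zero)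

interpretation fpsc_hom: comm_ring_hom "fps_const :: cpoly \<Rightarrow> cpoly fps"
  by unfold_locales (simp_all add: fps_const_add fps_const_mult)

lemma Tm_pS: "Tm (pS a) = fps_const (pS a) - fps_X * fps_const (pS (a - 1))"
proof (rule fps_ext)
  fix n
  have "Tm (pS a) $# n = (if n = 0 then pS a else if n = 1 then - pS (a - 1) else 0)"
    by (simp only: Tm_nth D_pS)
  moreover have "(fps_const (pS a) - fps_X * fps_const (pS (a - 1))) $# n = 
     (if n = 0 then pS a else if n = 1 then - pS (a - 1) else 0)"
    by (cases n) (simp_all add: fps_nth_fps_const)
  ultimately show "Tm (pS a) $# n = (fps_const (pS a) - fps_X * fps_const (pS (a - 1))) $# n"
    by simp
qed


definition schurI :: "int list \<Rightarrow> cpoly" where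
  "schurI L = det (mat (length L) (length L) (\<lambda>(i, j). pS (L ! i - int i + int j)))"

lemma schur_schurI: "schur lam = schurI (map int lam)"
  unfolding schur_def schurI_def
  by (rule arg_cong[of _ _ det], rule cong_mat) auto

lemma Tm_schurI: "Tm (schurI L) = det (mat (length L) (length L) (\<lambda>(i, j).
    fps_const (pS (L ! i - int i + int j)) - fps_X * fps_const (pS (L ! i - int i + int j - 1))))"
proof -
  have "Tm (schurI L) = det (map_mat Tm (mat (length L) (length L) (\<lambda>(i, j). pS (L ! i - int i + int j))))"
    unfolding schurI_def by (rule Tm_hom.hom_det[symmetric])
  also have "map_mat Tm (mat (length L) (length L) (\<lambda>(i, j). pS (L ! i - int i + int j))) =
     mat (length L) (length L) (\<lambda>(i, j).
    fps_const (pS (L ! i - int i + int j)) - fps_X * fps_const (pS (L ! i - int i + int j - 1)))"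
    by (rule eq_matI) (simp_all add: Tm_pS)
  finally show ?thesis .
qed

lemma QU_entry:
  fixes Q :: "cpoly fps mat"
  assumes Q: "Q \<in> carrier_mat n n" and ij: "i < n" "j < n"
  defines "U \<equiv> mat n n (\<lambda>(i,j). if i = j then 1 else if j = Suc i then - fps_X else 0)"
  shows "(Q * U) $$ (i,j) = Q $$ (i,j) - (if j = 0 then 0 else fps_X * Q $$ (i, j - 1))"
proof -
  have "(Q * U) $$ (i,j) = (\<Sum>k\<in>{0..<n}. Q $$ (i,k) * U $$ (k,j))"
    using Q ij by (simp add: U_def scalar_prod_def)
  also have "\<dots> = (\<Sum>k\<in>{0..<n}. (if k = j then Q $$ (i,k) else 0) +
        (if k = j - 1 \<and> j \<noteq> 0 then - (fps_X * Q $$ (i,k)) else 0))"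
    by (rule sum.cong[OF refl]) (use ij in \<open>auto simp: U_def\<close>)
  also have "\<dots> = Q $$ (i,j) - (if j = 0 then 0 else fps_X * Q $$ (i, j - 1))"
    using ij by (simp add: sum.distrib sum.delta)
  finally show ?thesis .
qed

lemma det_U: "det (mat n n (\<lambda>(i,j). if i = j then 1 else if j = Suc i then - fps_X else (0::cpoly fps))) = 1"
proof -
  let ?U = "mat n n (\<lambda>(i,j). if i = j then 1 else if j = Suc i then - fps_X else (0::cpoly fps))"
  have "det ?U = prod_list (diag_mat ?U)"
    by (rule det_upper_triangular) (auto simp: upper_triangular_def)
  also have "\<dots> = 1" by (simp add: prod_list_diag_prod)
  finally show ?thesis .
qed


theorem vertexX_schurI: "vertexX x (schurI L) = schurI (x # L)"
proof -
  define l where "l = length L"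
  define NF where "NF = (\<lambda>(i::nat, j::nat). pS ((x # L) ! i - int i + int j))"
  define N where "N = mat (Suc l) (Suc l) NF"
  have N: "N \<in> carrier_mat (Suc l) (Suc l)" by (simp add: N_def)
  have sN: "schurI (x # L) = det N" unfolding schurI_def N_def NF_def l_def by simp
  define Q :: "cpoly fps mat" where
    "Q = mat (Suc l) (Suc l) (\<lambda>(i,j). if i = 0 then fps_X ^ j else fps_const (NF (i,j)))"
  define U where "U = mat (Suc l) (Suc l) (\<lambda>(i,j). if i = j then 1 else if j = Suc i then - fps_X else (0::cpoly fps))"
  have Q: "Q \<in> carrier_mat (Suc l) (Suc l)" by (simp add: Q_def)
  have U: "U \<in> carrier_mat (Suc l) (Suc l)" by (simp add: U_def)
  have delQ: "mat_delete Q 0 j = map_mat fps_const (mat_delete N 0 j)" for j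
    by (rule eq_matI) (auto simp: mat_delete_def Q_def N_def)
  have cofQ: "cofactor Q 0 j = fps_const (cofactor N 0 j)" for j
    by (simp add: cofactor_def delQ fpsc_hom.hom_mult fpsc_hom.hom_power fpsc_hom.hom_uminus)
  have detQ: "det Q = (\<Sum>j<Suc l. fps_X ^ j * fps_const (cofactor N 0 j))"
  proof -
    have "det Q = (\<Sum>j<Suc l. Q $$ (0,j) * cofactor Q 0 j)" by (rule laplace_expansion_row[OF Q]) simp
    also have "\<dots> = (\<Sum>j<Suc l. fps_X ^ j * fps_const (cofactor N 0 j))"
      by (rule sum.cong[OF refl]) (simp add: cofQ, simp add: Q_def)
    finally show ?thesis .
  qed
  have QU_e: "(Q * U) $$ (i,j) = Q $$ (i,j) - (if j = 0 then 0 else fps_X * Q $$ (i, j - 1))"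
    if "i < Suc l" "j < Suc l" for i j
    using QU_entry[OF Q that] unfolding U_def .
  have QU: "Q * U \<in> carrier_mat (Suc l) (Suc l)" using Q U by simp
  have row0: "(Q * U) $$ (0,j) = (if j = 0 then 1 else 0)" if "j < Suc l" for j
  proof (cases j)
    case 0 thus ?thesis using QU_e[of 0 j] that by (simp add: Q_def)
  next
    case (Suc m) thus ?thesis using QU_e[of 0 j] that by (simp add: Q_def)
  qed
  have "det (Q * U) = (\<Sum>j<Suc l. (Q * U) $$ (0,j) * cofactor (Q * U) 0 j)"
    by (rule laplace_expansion_row[OF QU]) simp
  also have "\<dots> = (\<Sum>j<Suc l. if j = 0 then cofactor (Q * U) 0 j else 0)"
    by (rule sum.cong[OF refl]) (simp add: row0)
  also have "\<dots> = det (mat_delete (Q * U) 0 0)" by (simp add: cofactor_def)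
  also have "mat_delete (Q * U) 0 0 = mat l l (\<lambda>(i, j).
    fps_const (pS (L ! i - int i + int j)) - fps_X * fps_const (pS (L ! i - int i + int j - 1)))"
  proof (rule eq_matI)
    fix i j assume ij: "i < dim_row (mat l l (\<lambda>(i, j).
      fps_const (pS (L ! i - int i + int j)) - fps_X * fps_const (pS (L ! i - int i + int j - 1))))"
      "j < dim_col (mat l l (\<lambda>(i, j).
      fps_const (pS (L ! i - int i + int j)) - fps_X * fps_const (pS (L ! i - int i + int j - 1))))"
    hence ij': "i < l" "j < l" by auto
    have "mat_delete (Q * U) 0 0 $$ (i, j) = (Q * U) $$ (Suc i, Suc j)"
      using ij' Q U by (simp add: mat_delete_def)
    also have "\<dots> = Q $$ (Suc i, Suc j) - fps_X * Q $$ (Suc i, j)"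
      using QU_e[of "Suc i" "Suc j"] ij' by simp
    also have "\<dots> = fps_const (pS (L ! i - int i + int j)) - fps_X * fps_const (pS (L ! i - int i + int j - 1))"
      using ij' by (simp add: Q_def NF_def algebra_simps)
    finally show "mat_delete (Q * U) 0 0 $$ (i, j) = mat l l (\<lambda>(i, j).
      fps_const (pS (L ! i - int i + int j)) - fps_X * fps_const (pS (L ! i - int i + int j - 1))) $$ (i, j)"
      using ij' by simp
  qed (use QU in auto)
  also have "det (mat l l (\<lambda>(i, j).
    fps_const (pS (L ! i - int i + int j)) - fps_X * fps_const (pS (L ! i - int i + int j - 1)))) = Tm (schurI L)"
    by (simp add: Tm_schurI l_def)
  finally have "Tm (schurI L) = det (Q * U)" by simp
  also have "\<dots> = det Q * det U" by (rule det_mult[OF Q U])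
  also have "det U = 1" unfolding U_def by (rule det_U)
  finally have TmS: "Tm (schurI L) = (\<Sum>j<Suc l. fps_X ^ j * fps_const (cofactor N 0 j))"
    by (simp add: detQ)
  have Dcoef: "Dop b (schurI L) = (if b < Suc l then cofactor N 0 b else 0)" for b
  proof -
    have "Dop b (schurI L) = Tm (schurI L) $# b" by simp
    also have "\<dots> = (\<Sum>j<Suc l. if j = b then cofactor N 0 j else 0)"
      unfolding TmS fps_sum_nth 
      by (rule sum.cong[OF refl]) (auto simp: fps_X_power_mult_nth)
    also have "\<dots> = (if b < Suc l then cofactor N 0 b else 0)"
      by (simp add: sum.delta')
    finally show ?thesis .
  qed
  have "vertexX x (schurI L) = (\<Sum>b\<in>{b. Dop b (schurI L) \<noteq> 0}. pS (x + int b) * Dop b (schurI L))"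
    by (simp add: vertexX_def Dop_def)
  also have "\<dots> = (\<Sum>b\<in>{..<Suc l}. pS (x + int b) * Dop b (schurI L))"
    by (rule sum.mono_neutral_left) (auto simp: Dcoef split: if_splits)
  also have "\<dots> = (\<Sum>b<Suc l. N $$ (0, b) * cofactor N 0 b)"
    by (rule sum.cong[OF refl]) (simp add: Dcoef N_def NF_def)
  also have "\<dots> = det N" by (rule laplace_expansion_row[OF N, symmetric]) simp
  finally show ?thesis using sN by simp
qed


subsection \<open>Straightening\<close>

lemma nth_swap_same:
  assumes "i \<noteq> length L1" "i \<noteq> Suc (length L1)"
  shows "(L1 @ a # b # L2) ! i = (L1 @ c # d # L2) ! i"
proof (cases "i < length L1")
  case True thus ?thesis by (simp add: nth_append)
next
  case False
  have e: "i - length L1 = Suc (Suc (i - length L1 - 2))" using assms False by linarith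
  have "(L1 @ a # b # L2) ! i = (a # b # L2) ! (i - length L1)" by (simp add: nth_append False)
  also have "\<dots> = L2 ! (i - length L1 - 2)" by (subst e) simp
  also have "\<dots> = (c # d # L2) ! (i - length L1)" by (subst e) simp
  also have "\<dots> = (L1 @ c # d # L2) ! i" by (simp add: nth_append False)
  finally show ?thesis .
qed

lemma straighten: "schurI (L1 @ a # b # L2) = - schurI (L1 @ (b - 1) # (a + 1) # L2)"
proof -
  define L where "L = L1 @ a # b # L2"
  define L' where "L' = L1 @ (b - 1) # (a + 1) # L2"
  define n where "n = length L"
  define k where "k = length L1"
  have len: "length L' = n" by (simp add: L_def L'_def n_def)
  define M where "M = mat n n (\<lambda>(i, j). pS (L ! i - int i + int j))"
  have M: "M \<in> carrier_mat n n" by (simp add: M_def)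
  have k: "k < n" "Suc k < n" by (auto simp: k_def n_def L_def)
  have "mat n n (\<lambda>(i, j). pS (L' ! i - int i + int j)) = swaprows k (Suc k) M"
  proof (rule eq_matI)
    fix i j assume ij: "i < dim_row (swaprows k (Suc k) M)" "j < dim_col (swaprows k (Suc k) M)"
    hence ij': "i < n" "j < n" using M by auto
    show "mat n n (\<lambda>(i, j). pS (L' ! i - int i + int j)) $$ (i, j) = swaprows k (Suc k) M $$ (i, j)"
    proof -
      have "i = k \<or> i = Suc k \<or> (i \<noteq> k \<and> i \<noteq> Suc k)" by auto
      thus ?thesis
      proof (elim disjE)
        assume "i = k" thus ?thesis using ij' k M
          by (simp add: mat_swaprows_def M_def L_def L'_def k_def nth_append algebra_simps)
      next
        assume "i = Suc k" thus ?thesis using ij' k M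
          by (simp add: mat_swaprows_def M_def L_def L'_def k_def nth_append)
      next
        assume "i \<noteq> k \<and> i \<noteq> Suc k" thus ?thesis using ij' k M nth_swap_same[of i L1 a b L2 "b - 1" "a + 1"]
          by (simp add: mat_swaprows_def M_def L_def L'_def k_def)
      qed
    qed
  qed (use M in auto)
  hence "schurI L' = det (swaprows k (Suc k) M)" unfolding schurI_def len by simp
  also have "\<dots> = - det M" by (rule det_swaprows[OF k]) (auto simp: M)
  also have "det M = schurI L" by (simp add: schurI_def M_def n_def)
  finally show ?thesis by (simp add: L_def L'_def)
qed

lemma chain: "schurI (replicate k p @ (c - int j) # replicate j (p + 1)) =
    (-1) ^ j * schurI (replicate (k + j) p @ [c])"
proof (induction j arbitrary: k)
  case 0 thus ?case by simp
next
  case (Suc j)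
  have "schurI (replicate k p @ (c - int (Suc j)) # replicate (Suc j) (p + 1)) =
        schurI (replicate k p @ (c - int (Suc j)) # (p + 1) # replicate j (p + 1))" by simp
  also have "\<dots> = - schurI (replicate k p @ (p + 1 - 1) # (c - int (Suc j) + 1) # replicate j (p + 1))"
    by (rule straighten)
  also have "replicate k p @ (p + 1 - 1) # (c - int (Suc j) + 1) # replicate j (p + 1)
     = replicate (Suc k) p @ (c - int j) # replicate j (p + 1)"
    by (simp add: replicate_append_same[symmetric])
  also have "schurI \<dots> = (-1) ^ j * schurI (replicate (Suc k + j) p @ [c])" by (rule Suc.IH)
  finally show ?case by simp
qed

lemma app0: "schurI (L @ [0]) = schurI L"
proof -
  define l where "l = length L"
  define N where "N = mat (Suc l) (Suc l) (\<lambda>(i, j). pS ((L @ [0]) ! i - int i + int j))"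
  have N: "N \<in> carrier_mat (Suc l) (Suc l)" by (simp add: N_def)
  have "schurI (L @ [0]) = det N" by (simp add: schurI_def N_def l_def)
  also have "\<dots> = (\<Sum>j<Suc l. N $$ (l, j) * cofactor N l j)"
    by (rule laplace_expansion_row[OF N]) simp
  also have "\<dots> = (\<Sum>j<Suc l. if j = l then cofactor N l j else 0)"
    by (rule sum.cong[OF refl]) (auto simp: N_def pS_neg pS_0 l_def nth_append)
  also have "\<dots> = cofactor N l l" by simp
  also have "\<dots> = det (mat_delete N l l)" by (simp add: cofactor_def)
  also have "mat_delete N l l = mat l l (\<lambda>(i, j). pS (L ! i - int i + int j))"
    by (rule eq_matI) (auto simp: mat_delete_def N_def nth_append l_def)
  also have "det \<dots> = schurI L" by (simp add: schurI_def l_def)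
  finally show ?thesis .
qed

lemma rep0: "schurI (replicate k 0) = 1"
proof -
  let ?M = "mat k k (\<lambda>(i, j). pS (replicate k 0 ! i - int i + int j))"
  have "schurI (replicate k 0) = det ?M" by (simp add: schurI_def)
  also have "\<dots> = prod_list (diag_mat ?M)"
    by (rule det_upper_triangular) (auto simp: upper_triangular_def pS_neg)
  also have "\<dots> = 1" by (simp add: prod_list_diag_prod pS_0)
  finally show ?thesis .
qed


lemma schur_rect: "schur (rect n m) = schurI (replicate m (int n))"
proof (cases "n = 0")
  case True
  have "schur (rect n m) = 1" using True by (simp add: rect_def schur_def)
  thus ?thesis using True rep0[of m] by simp
next
  case False thus ?thesis by (simp add: rect_def schur_schurI)
qed

theorem lemma5p6:
  fixes m n :: nat
  shows "vertexX (- int m) (schur (rect (n + 1) m)) = (- 1) ^ m * schur (rect n m)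
       \<and> vertexX (int n - int m) (schur (rect (n + 1) m)) = (- 1) ^ m * schur (rect n (m + 1))
       \<and> vertexX (int n) (schur (rect n m)) = schur (rect n (m + 1))"
proof (intro conjI)
  have r1: "schur (rect (n + 1) m) = schurI (replicate m (int n + 1))" by (simp add: schur_rect add.commute)
  have "vertexX (- int m) (schur (rect (n + 1) m)) = schurI ((0 - int m) # replicate m (int n + 1))"
    unfolding r1 by (simp add: vertexX_schurI)
  also have "\<dots> = schurI (replicate 0 (int n) @ (0 - int m) # replicate m (int n + 1))" by simp
  also have "\<dots> = (-1) ^ m * schurI (replicate (0 + m) (int n) @ [0])" by (rule chain)
  also have "\<dots> = (-1) ^ m * schur (rect n m)" by (simp add: app0 schur_rect)
  finally show "vertexX (- int m) (schur (rect (n + 1) m)) = (- 1) ^ m * schur (rect n m)" .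
  have "vertexX (int n - int m) (schur (rect (n + 1) m)) = schurI ((int n - int m) # replicate m (int n + 1))"
    unfolding r1 by (simp add: vertexX_schurI)
  also have "\<dots> = schurI (replicate 0 (int n) @ (int n - int m) # replicate m (int n + 1))" by simp
  also have "\<dots> = (-1) ^ m * schurI (replicate (0 + m) (int n) @ [int n])" by (rule chain)
  also have "\<dots> = (-1) ^ m * schur (rect n (m + 1))" by (simp add: schur_rect replicate_append_same)
  finally show "vertexX (int n - int m) (schur (rect (n + 1) m)) = (- 1) ^ m * schur (rect n (m + 1))" .
  show "vertexX (int n) (schur (rect n m)) = schur (rect n (m + 1))"
    by (simp add: schur_rect vertexX_schurI)
qed

end
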